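(* Let $X$ be a scalable monoid over a ring $R$. The relation $\sim$ on $X$ is a congruence with respect to the operations $(x,y)\mapsto xy$ and $(\lambda,x)\mapsto\lambda\cdot x$; that is, if $x\sim x'$ and $y\sim y'$ then $xy\sim x'y'$, and if $x\sim x'$ then $\lambda\cdot x\sim\lambda\cdot x'$ for every $\lambda\in R$.
   Context: A scalable monoid over a (unital, associative, not necessarily commutative) ring $R$ is a monoid $X$ (identity $1_X$, product written $xy$) together with a map $R\times X\to X$, $(\alpha,x)\mapsto\alpha\cdot x$, such that $1\cdot x=x$, $\alpha\cdot(\beta\cdot x)=\alpha\beta\cdot x$ and $\alpha\cdot(xy)=(\alpha\cdot x)y=x(\alpha\cdot y)$ for all $\alpha,\beta\in R$, $x,y\in X$. The relation $\sim$ on $X$ is defined by $x\sim y$ iff $\alpha\cdot x=\beta\cdot y$ for some $\alpha,\beta\in R$; it is an equivalence relation. *)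

theory Defs
  imports Main
begin

definition scalable_monoid :: "('r::ring_1 \<Rightarrow> 'x::monoid_mult \<Rightarrow> 'x) \<Rightarrow> bool" where
  "scalable_monoid sc \<longleftrightarrow>
     (\<forall>x. sc 1 x = x) \<and>
     (\<forall>a b x. sc a (sc b x) = sc (a * b) x) \<and>
     (\<forall>a x y. sc a (x * y) = (sc a x) * y \<and> sc a (x * y) = x * (sc a y))"

definition sm_sim :: "('r::ring_1 \<Rightarrow> 'x::monoid_mult \<Rightarrow> 'x) \<Rightarrow> 'x \<Rightarrow> 'x \<Rightarrow> bool" where
  "sm_sim sc x y \<longleftrightarrow> (\<exists>a b. sc a x = sc b y)"

end

theory Submission
  imports Defs
begin

theorem proposition2p13:
  fixes sc :: "'r::ring_1 \<Rightarrow> 'x::monoid_mult \<Rightarrow> 'x"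
  assumes "scalable_monoid sc"
  shows "(\<forall>x x' y y'. sm_sim sc x x' \<longrightarrow> sm_sim sc y y' \<longrightarrow> sm_sim sc (x * y) (x' * y')) \<and>
         (\<forall>(l::'r) x x'. sm_sim sc x x' \<longrightarrow> sm_sim sc (sc l x) (sc l x'))"
proof -
  have A: "\<And>a b x. sc a (sc b x) = sc (a * b) x"
    and L: "\<And>a x y. sc a (x * y) = (sc a x) * y"
    and R: "\<And>a x y. sc a (x * y) = x * (sc a y)"
    using assms unfolding scalable_monoid_def by blast+
  have P: "sm_sim sc (x * y) (x' * y')" if h1: "sm_sim sc x x'" and h2: "sm_sim sc y y'" for x x' y y'
  proof -
    obtain a b where ab: "sc a x = sc b x'" using h1 unfolding sm_sim_def by auto
    obtain c d where cd: "sc c y = sc d y'" using h2 unfolding sm_sim_def by auto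
    have "sc (a * c) (x * y) = sc a x * sc c y" by (metis A L R)
    also have "\<dots> = sc b x' * sc d y'" using ab cd by simp
    also have "\<dots> = sc (b * d) (x' * y')" by (metis A L R)
    finally show ?thesis unfolding sm_sim_def by blast
  qed
  have S: "sm_sim sc (sc l x) (sc l x')" if "sm_sim sc x x'" for l x x'
  proof -
    have r: "sm_sim sc (sc l 1) (sc l 1)" unfolding sm_sim_def by blast
    have "sc l x = x * sc l 1" "sc l x' = x' * sc l 1" by (metis R mult_1_right)+
    thus ?thesis using P[OF that r] by simp
  qed
  show ?thesis using P S by blast
qed

end
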